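(* Let $C$ be a real random variable satisfying \[ C \overset{d}{=} U_{(1)}\mathbf 1_{\{V<U_{(1)}\}}\,C^{(1)} + (U_{(2)}-U_{(1)})\mathbf 1_{\{U_{(1)}<V<U_{(2)}\}}\,C^{(2)} + (1-U_{(2)})\mathbf 1_{\{V>U_{(2)}\}}\,C^{(3)} + 1 + U_{(2)}\bigl(2-U_{(1)}-U_{(2)}\bigr), \] where $C^{(1)},C^{(2)},C^{(3)}$ are independent copies of $C$, independent of $(U_1,U_2,V)$. Then $C$ also satisfies \[ C \overset{d}{=} X^*\,C' + g(X^*,W^* ), \] where $C'$ is a copy of $C$ independent of $(X^*,W^*,J)$.
   Context: $U_1,U_2,V$ are independent uniform on $(0,1)$; $U_{(1)}=\min\{U_1,U_2\}$, $U_{(2)}=\max\{U_1,U_2\}$. $(X^*,W^* )$ has joint density $f(x,w)=6x$ for $0<x<w<1$ and $0$ elsewhere. $J$ is uniform on $\{1,2,3\}$ and independent of $(X^*,W^* )$; $g(X^*,W^* )=h_J(X^*,W^* )$ with $h_1(x,w)=1+w(2-x-w)$, $h_2(x,w)=1+(1+x-w)(2w-x)$, $h_3(x,w)=1+(1-x)(x+w)$. *)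

theory Defs
  imports "HOL-Probability.Probability"
begin

definition unif01 :: "real measure" where
  "unif01 = uniform_measure lborel {0<..<1}"

definition XW_law :: "(real \<times> real) measure" where
  "XW_law = density (lborel \<Otimes>\<^sub>M lborel)
     (\<lambda>(x,w). ennreal (if 0 < x \<and> x < w \<and> w < 1 then 6 * x else 0))"

definition J_law :: "nat measure" where
  "J_law = uniform_count_measure {1,2,3}"

definition h1 :: "real \<Rightarrow> real \<Rightarrow> real" where "h1 x w = 1 + w * (2 - x - w)"
definition h2 :: "real \<Rightarrow> real \<Rightarrow> real" where "h2 x w = 1 + (1 + x - w) * (2 * w - x)"
definition h3 :: "real \<Rightarrow> real \<Rightarrow> real" where "h3 x w = 1 + (1 - x) * (x + w)"

definition hJ :: "nat \<Rightarrow> real \<Rightarrow> real \<Rightarrow> real" where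
  "hJ j x w = (if j = 1 then h1 x w else if j = 2 then h2 x w else h3 x w)"

definition T1 :: "(real \<times> real \<times> real) \<times> (real \<times> real \<times> real) \<Rightarrow> real" where
  "T1 = (\<lambda>((u1,u2,v),(c1,c2,c3)).
     let a = min u1 u2; b = max u1 u2 in
       a * indicator {v'. v' < a} v * c1
     + (b - a) * indicator {v'. a < v' \<and> v' < b} v * c2
     + (1 - b) * indicator {v'. v' > b} v * c3
     + 1 + b * (2 - a - b))"

text \<open>Right-hand side map of the second equation: X* C' + g(X*,W*), g = h_J.\<close>
definition T2 :: "((real \<times> real) \<times> nat) \<times> real \<Rightarrow> real" where
  "T2 = (\<lambda>(((x,w),j),c). x * c + hJ j x w)"

end

theory Submission imports Defs begin

lemma int_fst:
  assumes "prob_space N" and [measurable]: "f \<in> borel_measurable M"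
  shows "(\<integral>\<^sup>+z. f (fst z) \<partial>(M \<Otimes>\<^sub>M N)) = integral\<^sup>N M f"
proof -
  interpret N: prob_space N by fact
  have m: "(\<lambda>z. f (fst z)) \<in> borel_measurable (M \<Otimes>\<^sub>M N)" by measurable
  have "(\<integral>\<^sup>+z. f (fst z) \<partial>(M \<Otimes>\<^sub>M N)) = (\<integral>\<^sup>+x. \<integral>\<^sup>+y. f x \<partial>N \<partial>M)"
    using N.nn_integral_fst[OF m] by simp
  also have "\<dots> = integral\<^sup>N M f"
    by (simp add: N.emeasure_space_1)
  finally show ?thesis .
qed

lemma int_snd:
  assumes "prob_space M" "sigma_finite_measure N" and [measurable]: "f \<in> borel_measurable N"
  shows "(\<integral>\<^sup>+z. f (snd z) \<partial>(M \<Otimes>\<^sub>M N)) = integral\<^sup>N N f"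
proof -
  interpret M: prob_space M by fact
  interpret N: sigma_finite_measure N by fact
  have m: "(\<lambda>z. f (snd z)) \<in> borel_measurable (M \<Otimes>\<^sub>M N)" by measurable
  have "(\<integral>\<^sup>+z. f (snd z) \<partial>(M \<Otimes>\<^sub>M N)) = (\<integral>\<^sup>+x. \<integral>\<^sup>+y. f y \<partial>N \<partial>M)"
    using N.nn_integral_fst[OF m] by simp
  also have "\<dots> = integral\<^sup>N N f"
    by (simp add: M.emeasure_space_1)
  finally show ?thesis .
qed

lemma J_int: "(\<integral>\<^sup>+j. f j \<partial>J_law) = ennreal (1/3) * f 1 + ennreal (1/3) * f 2 + ennreal (1/3) * f 3"
proof -
  have e: "(1::ennreal) / 3 = ennreal (1/3)"
    by (metis divide_ennreal ennreal_1 ennreal_numeral zero_le_one zero_less_numeral)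
  show ?thesis
    unfolding J_law_def uniform_count_measure_def
    by (subst nn_integral_point_measure_finite) (auto simp: e add.assoc)
qed

lemma U_int:
  assumes [measurable]: "f \<in> borel_measurable borel"
  shows "(\<integral>\<^sup>+x. f x \<partial>unif01) = (\<integral>\<^sup>+x. f x * indicator {0<..<1} x \<partial>lborel)"
proof -
  have e: "emeasure lborel {0<..<1::real} = 1" by simp
  show ?thesis
  unfolding unif01_def
  by (subst nn_integral_uniform_measure) (auto simp: e divide_ennreal_def)
qed

lemma U_prob: "prob_space unif01"
  unfolding unif01_def by (rule prob_space_uniform_measure) auto

lemma J_prob: "prob_space J_law"
  unfolding J_law_def by (rule prob_space_uniform_count_measure) auto

lemma V_int:
  fixes a b :: real and p q r s :: ennreal
  assumes "0 \<le> a" "a \<le> b" "b \<le> 1"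
  shows "(\<integral>\<^sup>+v. (if v < a then p else if a < v \<and> v < b then q else if b < v then r else s)
            * indicator {0<..<1} v \<partial>lborel)
       = ennreal a * p + ennreal (b - a) * q + ennreal (1 - b) * r"
proof -
  have "(\<integral>\<^sup>+v. (if v < a then p else if a < v \<and> v < b then q else if b < v then r else s)
            * indicator {0<..<1} v \<partial>lborel)
     = (\<integral>\<^sup>+v. (p * indicator {0<..<a} v + q * indicator {a<..<b} v) + r * indicator {b<..<1} v \<partial>lborel)"
  proof (rule nn_integral_cong_AE)
    show "AE v in lborel. (if v < a then p else if a < v \<and> v < b then q else if b < v then r else s)
            * indicator {0<..<1} v = (p * indicator {0<..<a} v + q * indicator {a<..<b} v) + r * indicator {b<..<1} v"
      using AE_lborel_singleton[of a] AE_lborel_singleton[of b]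
    proof eventually_elim
      case (elim v)
      then show ?case using assms by (auto simp: indicator_def)
    qed
  qed
  also have "\<dots> = ennreal a * p + ennreal (b - a) * q + ennreal (1 - b) * r"
    using assms
    by (simp add: nn_integral_add nn_integral_cmult_indicator mult.commute)
  finally show ?thesis .
qed

definition psi :: "real measure \<Rightarrow> real set \<Rightarrow> real \<Rightarrow> real \<Rightarrow> ennreal" where
  "psi \<mu> A l g = (\<integral>\<^sup>+c. indicator A (l*c+g) \<partial>\<mu>)"


lemma six_third:
  fixes x :: real and a b c :: ennreal
  assumes "0 \<le> x"
  shows "ennreal (6*x) * (ennreal (1/3) * a + ennreal (1/3) * b + ennreal (1/3) * c)
       = 2 * (ennreal x * a + ennreal x * b + ennreal x * c)"
proof -
  have "ennreal (6*x) * ennreal (1/3) = ennreal (6*x*(1/3))"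
    by (rule ennreal_mult[symmetric]) (use assms in simp_all)
  also have "6*x*(1/3) = 2 * x" by simp
  also have "ennreal (2 * x) = 2 * ennreal x"
    using assms by (simp add: ennreal_mult)
  finally have k: "ennreal (6*x) * ennreal (1/3) = 2 * ennreal x" .
  show ?thesis
    by (simp add: distrib_left mult.assoc[symmetric] k)
qed

definition DD :: "real measure \<Rightarrow> real set \<Rightarrow> nat \<Rightarrow> ennreal" where
  "DD \<mu> A j = (\<integral>\<^sup>+x. \<integral>\<^sup>+w. (if 0 < x \<and> x < w \<and> w < 1 then ennreal x * psi \<mu> A x (hJ j x w) else 0) \<partial>lborel \<partial>lborel)"

definition gf :: "real \<Rightarrow> real \<Rightarrow> real" where "gf a b = 1 + b * (2 - a - b)"

definition Lf :: "real \<Rightarrow> real \<Rightarrow> real \<Rightarrow> real" where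
  "Lf u1 u2 v = (if v < min u1 u2 then min u1 u2 else if min u1 u2 < v \<and> v < max u1 u2 then max u1 u2 - min u1 u2
     else if max u1 u2 < v then 1 - max u1 u2 else 0)"

definition GG :: "real measure \<Rightarrow> real set \<Rightarrow> real \<Rightarrow> real \<Rightarrow> ennreal" where
  "GG \<mu> A a b = ennreal a * psi \<mu> A a (gf a b) + ennreal (b - a) * psi \<mu> A (b - a) (gf a b)
     + ennreal (1 - b) * psi \<mu> A (1 - b) (gf a b)"

definition HH :: "real measure \<Rightarrow> real set \<Rightarrow> real \<Rightarrow> real \<Rightarrow> ennreal" where
  "HH \<mu> A a b = (if 0 < a \<and> a < b \<and> b < 1 then GG \<mu> A a b else 0)"

definition PhiF :: "real measure \<Rightarrow> real set \<Rightarrow> real \<Rightarrow> real \<Rightarrow> real \<Rightarrow> ennreal" where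
  "PhiF \<mu> A u1 u2 v = psi \<mu> A (Lf u1 u2 v) (gf (min u1 u2) (max u1 u2))"

context
  fixes \<mu> :: "real measure" and A :: "real set"
  assumes P: "prob_space \<mu>" and S: "sets \<mu> = sets borel" and AS: "A \<in> sets borel"
begin

lemma idmeas: "(\<lambda>c. c) \<in> borel_measurable \<mu>"
  using measurable_ident_sets[OF S] by (simp add: id_def)

lemma idmeas2: "(\<lambda>c. c) \<in> borel \<rightarrow>\<^sub>M \<mu>"
  using measurable_ident_sets[OF S[symmetric]] by (simp add: id_def)

lemma psi_meas[measurable (raw)]:
  assumes [measurable]: "f \<in> borel_measurable M" "g \<in> borel_measurable M"
  shows "(\<lambda>x. psi \<mu> A (f x) (g x)) \<in> borel_measurable M"
proof -
  interpret prob_space \<mu> by (rule P)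
  note AS[measurable] idmeas[measurable]
  show ?thesis unfolding psi_def
    by measurable
qed

lemma E2: "emeasure (distr ((XW_law \<Otimes>\<^sub>M J_law) \<Otimes>\<^sub>M \<mu>) borel T2) A = 2 * (DD \<mu> A 1 + DD \<mu> A 2 + DD \<mu> A 3)"
proof -
  interpret prob_space \<mu> by (rule P)
  interpret J: prob_space J_law by (rule J_prob)
  note AS[measurable]
  have T2e: "T2 = (\<lambda>z. fst (fst (fst z)) * snd z + hJ (snd (fst z)) (fst (fst (fst z))) (snd (fst (fst z))))"
    by (auto simp: fun_eq_iff T2_def split: prod.splits)
  have T2m[measurable]: "T2 \<in> borel_measurable ((XW_law \<Otimes>\<^sub>M J_law) \<Otimes>\<^sub>M \<mu>)"
  proof -
    note idmeas[measurable]
    show ?thesis unfolding T2e hJ_def h1_def h2_def h3_def XW_law_def J_law_def by measurable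
  qed
  let ?M = "(XW_law \<Otimes>\<^sub>M J_law) \<Otimes>\<^sub>M \<mu>"
  let ?F = "\<lambda>j x w. (if 0 < x \<and> x < w \<and> w < 1 then ennreal x * psi \<mu> A x (hJ j x w) else 0)"
  have "emeasure (distr ?M borel T2) A = (\<integral>\<^sup>+x. indicator A x \<partial>(distr ?M borel T2))"
    by simp
  also have "\<dots> = (\<integral>\<^sup>+z. indicator A (T2 z) \<partial>?M)"
    apply (rule nn_integral_distr)
     apply (rule T2m)
    apply (rule borel_measurable_indicator)
    apply (simp add: AS)
    done
  also have "\<dots> = (\<integral>\<^sup>+p. \<integral>\<^sup>+c. indicator A (T2 (p,c)) \<partial>\<mu> \<partial>(XW_law \<Otimes>\<^sub>M J_law))"
    by (rule nn_integral_fst[of "\<lambda>z. indicator A (T2 z)", symmetric]) measurable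
  also have "\<dots> = (\<integral>\<^sup>+p. psi \<mu> A (fst (fst p)) (hJ (snd p) (fst (fst p)) (snd (fst p))) \<partial>(XW_law \<Otimes>\<^sub>M J_law))"
    by (intro nn_integral_cong) (auto simp: T2_def psi_def split: prod.splits)
  also have "\<dots> = (\<integral>\<^sup>+q. \<integral>\<^sup>+j. psi \<mu> A (fst q) (hJ j (fst q) (snd q)) \<partial>J_law \<partial>XW_law)"
    by (rule J.nn_integral_fst[of "\<lambda>p. psi \<mu> A (fst (fst p)) (hJ (snd p) (fst (fst p)) (snd (fst p)))", symmetric, simplified])
       (unfold hJ_def h1_def h2_def h3_def XW_law_def J_law_def, measurable)
  also have "\<dots> = (\<integral>\<^sup>+q. ennreal (1/3) * psi \<mu> A (fst q) (hJ 1 (fst q) (snd q))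
       + ennreal (1/3) * psi \<mu> A (fst q) (hJ 2 (fst q) (snd q))
       + ennreal (1/3) * psi \<mu> A (fst q) (hJ 3 (fst q) (snd q)) \<partial>XW_law)"
    by (simp add: J_int)
  also have "\<dots> = (\<integral>\<^sup>+q. ennreal (if 0 < fst q \<and> fst q < snd q \<and> snd q < 1 then 6 * fst q else 0) *
        (ennreal (1/3) * psi \<mu> A (fst q) (hJ 1 (fst q) (snd q))
       + ennreal (1/3) * psi \<mu> A (fst q) (hJ 2 (fst q) (snd q))
       + ennreal (1/3) * psi \<mu> A (fst q) (hJ 3 (fst q) (snd q))) \<partial>(lborel \<Otimes>\<^sub>M lborel))"
  proof -
    let ?g = "\<lambda>q. ennreal (1/3) * psi \<mu> A (fst q) (hJ 1 (fst q) (snd q))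
       + ennreal (1/3) * psi \<mu> A (fst q) (hJ 2 (fst q) (snd q))
       + ennreal (1/3) * psi \<mu> A (fst q) (hJ 3 (fst q) (snd q))"
    have m1: "(\<lambda>(x::real,w::real). ennreal (if 0 < x \<and> x < w \<and> w < 1 then 6 * x else 0)) \<in> borel_measurable (lborel \<Otimes>\<^sub>M lborel)"
      by measurable
    have m2: "?g \<in> borel_measurable (lborel \<Otimes>\<^sub>M lborel)"
      unfolding hJ_def h1_def h2_def h3_def by simp measurable
    show ?thesis
      unfolding XW_law_def nn_integral_density[OF m1 m2]
      by (intro nn_integral_cong) (simp add: case_prod_beta)
  qed
  also have "\<dots> = (\<integral>\<^sup>+x. \<integral>\<^sup>+w. ennreal (if 0 < x \<and> x < w \<and> w < 1 then 6 * x else 0) *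
        (ennreal (1/3) * psi \<mu> A x (hJ 1 x w)
       + ennreal (1/3) * psi \<mu> A x (hJ 2 x w)
       + ennreal (1/3) * psi \<mu> A x (hJ 3 x w)) \<partial>lborel \<partial>lborel)"
  proof -
    let ?G = "\<lambda>q. ennreal (if 0 < fst q \<and> fst q < snd q \<and> snd q < 1 then 6 * fst q else 0) *
        (ennreal (1/3) * psi \<mu> A (fst q) (hJ 1 (fst q) (snd q))
       + ennreal (1/3) * psi \<mu> A (fst q) (hJ 2 (fst q) (snd q))
       + ennreal (1/3) * psi \<mu> A (fst q) (hJ 3 (fst q) (snd q)))"
    have mG: "?G \<in> borel_measurable (lborel \<Otimes>\<^sub>M lborel)"
      unfolding hJ_def h1_def h2_def h3_def by simp measurable
    show ?thesis
      using lborel.nn_integral_fst[OF mG] by (simp only: fst_conv snd_conv)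
  qed
  also have "\<dots> = (\<integral>\<^sup>+x. \<integral>\<^sup>+w. 2 * (?F 1 x w + ?F 2 x w + ?F 3 x w) \<partial>lborel \<partial>lborel)"
    by (intro nn_integral_cong) (auto simp: six_third)
  also have "\<dots> = (\<integral>\<^sup>+x. 2 * ((\<integral>\<^sup>+w. ?F 1 x w \<partial>lborel) + (\<integral>\<^sup>+w. ?F 2 x w \<partial>lborel) + (\<integral>\<^sup>+w. ?F 3 x w \<partial>lborel)) \<partial>lborel)"
  proof -
    have Fm: "(\<lambda>w. ?F j x w) \<in> borel_measurable lborel" for j x
      by (cases "j = 1"; cases "j = 2") (simp_all add: hJ_def h1_def h2_def h3_def; measurable)+
    show ?thesis
      by (intro nn_integral_cong)
         (simp only: nn_integral_cmult[OF borel_measurable_add[OF borel_measurable_add[OF Fm Fm] Fm]]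
            nn_integral_add[OF borel_measurable_add[OF Fm Fm] Fm] nn_integral_add[OF Fm Fm])
  qed
  also have "\<dots> = 2 * (DD \<mu> A 1 + DD \<mu> A 2 + DD \<mu> A 3)"
  proof -
    have Fp: "(\<lambda>(x,w). ?F j x w) \<in> borel_measurable (lborel \<Otimes>\<^sub>M lborel)" for j
      unfolding hJ_def h1_def h2_def h3_def by measurable
    have Fm2: "(\<lambda>x. \<integral>\<^sup>+w. ?F j x w \<partial>lborel) \<in> borel_measurable lborel" for j
      by (rule lborel.borel_measurable_nn_integral[OF Fp])
    show ?thesis
      unfolding DD_def
      by (simp only: nn_integral_cmult[OF borel_measurable_add[OF borel_measurable_add[OF Fm2 Fm2] Fm2]]
            nn_integral_add[OF borel_measurable_add[OF Fm2 Fm2] Fm2] nn_integral_add[OF Fm2 Fm2])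
  qed
  finally show ?thesis .
qed


lemma inner1:
  "(\<integral>\<^sup>+c. indicator A (T1 ((u1,u2,v),c)) \<partial>(\<mu> \<Otimes>\<^sub>M \<mu> \<Otimes>\<^sub>M \<mu>))
    = psi \<mu> A (Lf u1 u2 v) (gf (min u1 u2) (max u1 u2))"
proof -
  interpret prob_space \<mu> by (rule P)
  have P2: "prob_space (\<mu> \<Otimes>\<^sub>M \<mu>)" by (rule prob_space_pair[OF P P])
  have SF2: "sigma_finite_measure (\<mu> \<Otimes>\<^sub>M \<mu>)"
    using P2 prob_space_imp_sigma_finite by blast
  have SF1: "sigma_finite_measure \<mu>"
    using P prob_space_imp_sigma_finite by blast
  note AS[measurable] idmeas[measurable]
  define a where "a = min u1 u2"
  define b where "b = max u1 u2"
  define g where "g = gf a b"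
  have ab: "a \<le> b" unfolding a_def b_def by simp
  have m: "(\<lambda>c. indicator A (l * c + g) :: ennreal) \<in> borel_measurable \<mu>" for l
    by measurable
  consider "v < a" | "a < v \<and> v < b" | "b < v" | "v = a \<or> v = b" using ab by linarith
  then show ?thesis
  proof cases
    case 1
    have "(\<integral>\<^sup>+c. indicator A (T1 ((u1,u2,v),c)) \<partial>(\<mu> \<Otimes>\<^sub>M \<mu> \<Otimes>\<^sub>M \<mu>))
        = (\<integral>\<^sup>+c. indicator A (a * fst c + g) \<partial>(\<mu> \<Otimes>\<^sub>M (\<mu> \<Otimes>\<^sub>M \<mu>)))"
      using 1 ab by (intro nn_integral_cong)
         (auto simp: T1_def Let_def a_def b_def g_def gf_def indicator_def add.assoc split: prod.splits)
    also have "\<dots> = psi \<mu> A a g"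
      unfolding psi_def by (rule int_fst[OF P2 m])
    finally show ?thesis using 1 ab by (auto simp: Lf_def a_def b_def g_def)
  next
    case 2
    have "(\<integral>\<^sup>+c. indicator A (T1 ((u1,u2,v),c)) \<partial>(\<mu> \<Otimes>\<^sub>M \<mu> \<Otimes>\<^sub>M \<mu>))
        = (\<integral>\<^sup>+c. (\<lambda>d. indicator A ((b - a) * fst d + g)) (snd c) \<partial>(\<mu> \<Otimes>\<^sub>M (\<mu> \<Otimes>\<^sub>M \<mu>)))"
      using 2 ab by (intro nn_integral_cong)
         (auto simp: T1_def Let_def a_def b_def g_def gf_def indicator_def add.assoc split: prod.splits)
    also have "\<dots> = (\<integral>\<^sup>+d. indicator A ((b - a) * fst d + g) \<partial>(\<mu> \<Otimes>\<^sub>M \<mu>))"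
      by (rule int_snd[OF P SF2]) measurable
    also have "\<dots> = psi \<mu> A (b - a) g"
      unfolding psi_def by (rule int_fst[OF P m])
    finally show ?thesis using 2 ab by (auto simp: Lf_def a_def b_def g_def)
  next
    case 3
    have "(\<integral>\<^sup>+c. indicator A (T1 ((u1,u2,v),c)) \<partial>(\<mu> \<Otimes>\<^sub>M \<mu> \<Otimes>\<^sub>M \<mu>))
        = (\<integral>\<^sup>+c. (\<lambda>d. indicator A ((1 - b) * snd d + g)) (snd c) \<partial>(\<mu> \<Otimes>\<^sub>M (\<mu> \<Otimes>\<^sub>M \<mu>)))"
      using 3 ab by (intro nn_integral_cong)
         (auto simp: T1_def Let_def a_def b_def g_def gf_def indicator_def add.assoc split: prod.splits)
    also have "\<dots> = (\<integral>\<^sup>+d. indicator A ((1 - b) * snd d + g) \<partial>(\<mu> \<Otimes>\<^sub>M \<mu>))"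
      by (rule int_snd[OF P SF2]) measurable
    also have "\<dots> = psi \<mu> A (1 - b) g"
      unfolding psi_def by (rule int_snd[OF P SF1 m])
    finally show ?thesis using 3 ab by (auto simp: Lf_def a_def b_def g_def)
  next
    case 4
    have "(\<integral>\<^sup>+c. indicator A (T1 ((u1,u2,v),c)) \<partial>(\<mu> \<Otimes>\<^sub>M \<mu> \<Otimes>\<^sub>M \<mu>))
        = (\<integral>\<^sup>+c. indicator A g \<partial>(\<mu> \<Otimes>\<^sub>M (\<mu> \<Otimes>\<^sub>M \<mu>)))"
      using 4 ab by (intro nn_integral_cong)
         (auto simp: T1_def Let_def a_def b_def g_def gf_def indicator_def add.assoc split: prod.splits)
    also have "\<dots> = indicator A g"
      using prob_space.emeasure_space_1[OF prob_space_pair[OF P P2]] by simp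
    also have "\<dots> = psi \<mu> A 0 g"
      unfolding psi_def by (simp add: emeasure_space_1)
    finally show ?thesis using 4 ab by (auto simp: Lf_def a_def b_def g_def)
  qed
qed


lemma cv2:
  "(\<integral>\<^sup>+a. \<integral>\<^sup>+b. (if 0 < a \<and> a < b \<and> b < 1 then ennreal (b - a) * psi \<mu> A (b - a) (gf a b) else 0) \<partial>lborel \<partial>lborel)
   = DD \<mu> A 2"
proof -
  let ?K = "\<lambda>a b. (if 0 < a \<and> a < b \<and> b < 1 then ennreal (b - a) * psi \<mu> A (b - a) (gf a b) else 0)"
  let ?K2 = "\<lambda>a x. ?K a (a + 1 * x)"
  let ?K3 = "\<lambda>w x. ?K2 (1 + (-1) * w) x"
  have mK: "?K a \<in> borel_measurable borel" for a
    unfolding gf_def by measurable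
  have mK2: "(\<lambda>(a,x). ?K2 a x) \<in> borel_measurable (borel \<Otimes>\<^sub>M lborel)"
    unfolding gf_def by measurable
  have mK2': "(\<lambda>a. \<integral>\<^sup>+x. ?K2 a x \<partial>lborel) \<in> borel_measurable borel"
    by (rule lborel.borel_measurable_nn_integral[OF mK2])
  have mK3: "(\<lambda>(x,w). ?K3 w x) \<in> borel_measurable (lborel \<Otimes>\<^sub>M lborel)"
    unfolding gf_def by measurable
  have "(\<integral>\<^sup>+a. \<integral>\<^sup>+b. ?K a b \<partial>lborel \<partial>lborel) = (\<integral>\<^sup>+a. \<integral>\<^sup>+x. ?K2 a x \<partial>lborel \<partial>lborel)"
  proof -
    have aff: "(\<integral>\<^sup>+b. ?K a b \<partial>lborel) = (\<integral>\<^sup>+x. ?K2 a x \<partial>lborel)" for a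
      using nn_integral_real_affine[OF mK, where c=1 and t=a] by simp
    show ?thesis by (simp only: aff)
  qed
  also have "\<dots> = (\<integral>\<^sup>+w. \<integral>\<^sup>+x. ?K3 w x \<partial>lborel \<partial>lborel)"
    using nn_integral_real_affine[OF mK2', where c="-1" and t=1] by simp
  also have "\<dots> = (\<integral>\<^sup>+x. \<integral>\<^sup>+w. ?K3 w x \<partial>lborel \<partial>lborel)"
    by (rule lborel_pair.Fubini'[OF mK3])
  also have "\<dots> = DD \<mu> A 2"
    unfolding DD_def
  proof (intro nn_integral_cong)
    fix x w :: real
    have c: "(0 < 1 + (-1) * w \<and> 1 + (-1) * w < 1 + (-1) * w + 1 * x \<and> 1 + (-1) * w + 1 * x < 1) = (0 < x \<and> x < w \<and> w < 1)"
      by auto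
    have d: "1 + (-1) * w + 1 * x - (1 + (-1) * w) = x" by simp
    have e: "gf (1 + (-1) * w) (1 + (-1) * w + 1 * x) = hJ 2 x w"
      by (simp add: gf_def hJ_def h2_def algebra_simps)
    show "?K3 w x = (if 0 < x \<and> x < w \<and> w < 1 then ennreal x * psi \<mu> A x (hJ 2 x w) else 0)"
      by (simp only: c d e)
  qed
  finally show ?thesis .
qed

lemma cv3:
  "(\<integral>\<^sup>+a. \<integral>\<^sup>+b. (if 0 < a \<and> a < b \<and> b < 1 then ennreal (1 - b) * psi \<mu> A (1 - b) (gf a b) else 0) \<partial>lborel \<partial>lborel)
   = DD \<mu> A 3"
proof -
  let ?K = "\<lambda>a b. (if 0 < a \<and> a < b \<and> b < 1 then ennreal (1 - b) * psi \<mu> A (1 - b) (gf a b) else 0)"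
  let ?K2 = "\<lambda>b w. ?K (1 + (-1) * w) b"
  let ?K3 = "\<lambda>x w. ?K2 (1 + (-1) * x) w"
  have mK0: "(\<lambda>(a,b). ?K a b) \<in> borel_measurable (lborel \<Otimes>\<^sub>M lborel)"
    unfolding gf_def by measurable
  have mK: "(\<lambda>a. ?K a b) \<in> borel_measurable borel" for b
    unfolding gf_def by measurable
  have mK2: "(\<lambda>(b,w). ?K2 b w) \<in> borel_measurable (borel \<Otimes>\<^sub>M lborel)"
    unfolding gf_def by measurable
  have mK2': "(\<lambda>b. \<integral>\<^sup>+w. ?K2 b w \<partial>lborel) \<in> borel_measurable borel"
    by (rule lborel.borel_measurable_nn_integral[OF mK2])
  have "(\<integral>\<^sup>+a. \<integral>\<^sup>+b. ?K a b \<partial>lborel \<partial>lborel) = (\<integral>\<^sup>+b. \<integral>\<^sup>+a. ?K a b \<partial>lborel \<partial>lborel)"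
    by (rule lborel_pair.Fubini'[OF mK0, symmetric])
  also have "\<dots> = (\<integral>\<^sup>+b. \<integral>\<^sup>+w. ?K2 b w \<partial>lborel \<partial>lborel)"
  proof -
    have aff: "(\<integral>\<^sup>+a. ?K a b \<partial>lborel) = (\<integral>\<^sup>+w. ?K2 b w \<partial>lborel)" for b
      using nn_integral_real_affine[OF mK, where c="-1" and t=1] by simp
    show ?thesis by (simp only: aff)
  qed
  also have "\<dots> = (\<integral>\<^sup>+x. \<integral>\<^sup>+w. ?K3 x w \<partial>lborel \<partial>lborel)"
    using nn_integral_real_affine[OF mK2', where c="-1" and t=1] by simp
  also have "\<dots> = DD \<mu> A 3"
    unfolding DD_def
  proof (intro nn_integral_cong)
    fix x w :: real
    have c: "(0 < 1 + (-1) * w \<and> 1 + (-1) * w < 1 + (-1) * x \<and> 1 + (-1) * x < 1) = (0 < x \<and> x < w \<and> w < 1)"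
      by auto
    have d: "1 - (1 + (-1) * x) = x" by simp
    have e: "gf (1 + (-1) * w) (1 + (-1) * x) = hJ 3 x w"
      by (simp add: gf_def hJ_def h3_def algebra_simps)
    show "?K3 x w = (if 0 < x \<and> x < w \<and> w < 1 then ennreal x * psi \<mu> A x (hJ 3 x w) else 0)"
      by (simp only: c d e)
  qed
  finally show ?thesis .
qed


lemma HH_meas[measurable (raw)]:
  assumes [measurable]: "f \<in> borel_measurable M" "g \<in> borel_measurable M"
  shows "(\<lambda>x. HH \<mu> A (f x) (g x)) \<in> borel_measurable M"
  unfolding HH_def GG_def gf_def by measurable

lemma PhiF_meas[measurable (raw)]:
  assumes [measurable]: "f \<in> borel_measurable M" "g \<in> borel_measurable M" "h \<in> borel_measurable M"
  shows "(\<lambda>x. PhiF \<mu> A (f x) (g x) (h x)) \<in> borel_measurable M"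
  unfolding PhiF_def Lf_def gf_def by measurable

lemma splitH: "(\<integral>\<^sup>+a. \<integral>\<^sup>+b. HH \<mu> A a b \<partial>lborel \<partial>lborel) = DD \<mu> A 1 + DD \<mu> A 2 + DD \<mu> A 3"
proof -
  let ?F1 = "\<lambda>a b. (if 0 < a \<and> a < b \<and> b < 1 then ennreal a * psi \<mu> A a (gf a b) else 0)"
  let ?F2 = "\<lambda>a b. (if 0 < a \<and> a < b \<and> b < 1 then ennreal (b - a) * psi \<mu> A (b - a) (gf a b) else 0)"
  let ?F3 = "\<lambda>a b. (if 0 < a \<and> a < b \<and> b < 1 then ennreal (1 - b) * psi \<mu> A (1 - b) (gf a b) else 0)"
  have p1: "(\<lambda>(a,b). ?F1 a b) \<in> borel_measurable (lborel \<Otimes>\<^sub>M lborel)" unfolding gf_def by measurable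
  have p2: "(\<lambda>(a,b). ?F2 a b) \<in> borel_measurable (lborel \<Otimes>\<^sub>M lborel)" unfolding gf_def by measurable
  have p3: "(\<lambda>(a,b). ?F3 a b) \<in> borel_measurable (lborel \<Otimes>\<^sub>M lborel)" unfolding gf_def by measurable
  have i1: "(\<lambda>a. \<integral>\<^sup>+b. ?F1 a b \<partial>lborel) \<in> borel_measurable lborel" by (rule lborel.borel_measurable_nn_integral[OF p1])
  have i2: "(\<lambda>a. \<integral>\<^sup>+b. ?F2 a b \<partial>lborel) \<in> borel_measurable lborel" by (rule lborel.borel_measurable_nn_integral[OF p2])
  have i3: "(\<lambda>a. \<integral>\<^sup>+b. ?F3 a b \<partial>lborel) \<in> borel_measurable lborel" by (rule lborel.borel_measurable_nn_integral[OF p3])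
  have f1: "?F1 a \<in> borel_measurable lborel" for a unfolding gf_def by measurable
  have f2: "?F2 a \<in> borel_measurable lborel" for a unfolding gf_def by measurable
  have f3: "?F3 a \<in> borel_measurable lborel" for a unfolding gf_def by measurable
  have "(\<integral>\<^sup>+a. \<integral>\<^sup>+b. HH \<mu> A a b \<partial>lborel \<partial>lborel) = (\<integral>\<^sup>+a. \<integral>\<^sup>+b. (?F1 a b + ?F2 a b) + ?F3 a b \<partial>lborel \<partial>lborel)"
    by (intro nn_integral_cong) (simp add: HH_def GG_def)
  also have "\<dots> = (\<integral>\<^sup>+a. ((\<integral>\<^sup>+b. ?F1 a b \<partial>lborel) + (\<integral>\<^sup>+b. ?F2 a b \<partial>lborel)) + (\<integral>\<^sup>+b. ?F3 a b \<partial>lborel) \<partial>lborel)"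
    by (intro nn_integral_cong)
       (simp only: nn_integral_add[OF borel_measurable_add[OF f1 f2] f3] nn_integral_add[OF f1 f2])
  also have "\<dots> = ((\<integral>\<^sup>+a. \<integral>\<^sup>+b. ?F1 a b \<partial>lborel \<partial>lborel) + (\<integral>\<^sup>+a. \<integral>\<^sup>+b. ?F2 a b \<partial>lborel \<partial>lborel))
       + (\<integral>\<^sup>+a. \<integral>\<^sup>+b. ?F3 a b \<partial>lborel \<partial>lborel)"
    by (simp only: nn_integral_add[OF borel_measurable_add[OF i1 i2] i3] nn_integral_add[OF i1 i2])
  also have "(\<integral>\<^sup>+a. \<integral>\<^sup>+b. ?F1 a b \<partial>lborel \<partial>lborel) = DD \<mu> A 1"
    unfolding DD_def by (intro nn_integral_cong) (simp add: hJ_def h1_def gf_def)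
  also note cv2
  also note cv3
  finally show ?thesis .
qed

lemma symm:
  "(\<integral>\<^sup>+u1. (\<integral>\<^sup>+u2. GG \<mu> A (min u1 u2) (max u1 u2) * indicator {0<..<1} u2 \<partial>lborel) * indicator {0<..<1} u1 \<partial>lborel)
   = (\<integral>\<^sup>+a. \<integral>\<^sup>+b. HH \<mu> A a b \<partial>lborel \<partial>lborel) + (\<integral>\<^sup>+a. \<integral>\<^sup>+b. HH \<mu> A a b \<partial>lborel \<partial>lborel)"
proof -
  have q1: "(\<lambda>(a,b). HH \<mu> A a b) \<in> borel_measurable (lborel \<Otimes>\<^sub>M lborel)" by measurable
  have q2: "(\<lambda>(a,b). HH \<mu> A b a) \<in> borel_measurable (lborel \<Otimes>\<^sub>M lborel)" by measurable
  have j1: "(\<lambda>a. \<integral>\<^sup>+b. HH \<mu> A a b \<partial>lborel) \<in> borel_measurable lborel" by (rule lborel.borel_measurable_nn_integral[OF q1])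
  have j2: "(\<lambda>a. \<integral>\<^sup>+b. HH \<mu> A b a \<partial>lborel) \<in> borel_measurable lborel" by (rule lborel.borel_measurable_nn_integral[OF q2])
  have g1: "(\<lambda>b. HH \<mu> A a b) \<in> borel_measurable lborel" for a by measurable
  have g2: "(\<lambda>b. HH \<mu> A b a) \<in> borel_measurable lborel" for a by measurable
  have "(\<integral>\<^sup>+u1. (\<integral>\<^sup>+u2. GG \<mu> A (min u1 u2) (max u1 u2) * indicator {0<..<1} u2 \<partial>lborel) * indicator {0<..<1} u1 \<partial>lborel)
     = (\<integral>\<^sup>+u1. \<integral>\<^sup>+u2. HH \<mu> A u1 u2 + HH \<mu> A u2 u1 \<partial>lborel \<partial>lborel)"
  proof (intro nn_integral_cong)
    fix u1 :: real
    show "(\<integral>\<^sup>+u2. GG \<mu> A (min u1 u2) (max u1 u2) * indicator {0<..<1} u2 \<partial>lborel) * indicator {0<..<1} u1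
        = (\<integral>\<^sup>+u2. HH \<mu> A u1 u2 + HH \<mu> A u2 u1 \<partial>lborel)"
    proof (cases "u1 \<in> {0<..<1}")
      case True
      have "(\<integral>\<^sup>+u2. GG \<mu> A (min u1 u2) (max u1 u2) * indicator {0<..<1} u2 \<partial>lborel)
          = (\<integral>\<^sup>+u2. HH \<mu> A u1 u2 + HH \<mu> A u2 u1 \<partial>lborel)"
      proof (rule nn_integral_cong_AE)
        show "AE u2 in lborel. GG \<mu> A (min u1 u2) (max u1 u2) * indicator {0<..<1} u2 = HH \<mu> A u1 u2 + HH \<mu> A u2 u1"
          using AE_lborel_singleton[of u1]
        proof eventually_elim
          case (elim u2)
          then show ?case using True
            by (cases "u1 < u2") (auto simp: HH_def indicator_def min_def max_def)
        qed
      qed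
      then show ?thesis using True by simp
    next
      case False
      have "HH \<mu> A u1 u2 + HH \<mu> A u2 u1 = 0" for u2
        using False by (auto simp: HH_def)
      then show ?thesis using False by simp
    qed
  qed
  also have "\<dots> = (\<integral>\<^sup>+u1. (\<integral>\<^sup>+u2. HH \<mu> A u1 u2 \<partial>lborel) + (\<integral>\<^sup>+u2. HH \<mu> A u2 u1 \<partial>lborel) \<partial>lborel)"
    by (intro nn_integral_cong) (simp only: nn_integral_add[OF g1 g2])
  also have "\<dots> = (\<integral>\<^sup>+u1. \<integral>\<^sup>+u2. HH \<mu> A u1 u2 \<partial>lborel \<partial>lborel) + (\<integral>\<^sup>+u1. \<integral>\<^sup>+u2. HH \<mu> A u2 u1 \<partial>lborel \<partial>lborel)"
    by (simp only: nn_integral_add[OF j1 j2])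
  also have "(\<integral>\<^sup>+u1. \<integral>\<^sup>+u2. HH \<mu> A u2 u1 \<partial>lborel \<partial>lborel) = (\<integral>\<^sup>+u2. \<integral>\<^sup>+u1. HH \<mu> A u2 u1 \<partial>lborel \<partial>lborel)"
    by (rule lborel_pair.Fubini'[OF q1])
  finally show ?thesis .
qed


lemma E1: "emeasure (distr ((unif01 \<Otimes>\<^sub>M unif01 \<Otimes>\<^sub>M unif01) \<Otimes>\<^sub>M (\<mu> \<Otimes>\<^sub>M \<mu> \<Otimes>\<^sub>M \<mu>)) borel T1) A
   = 2 * (DD \<mu> A 1 + DD \<mu> A 2 + DD \<mu> A 3)"
proof -
  let ?U = unif01
  let ?M = "(?U \<Otimes>\<^sub>M ?U \<Otimes>\<^sub>M ?U) \<Otimes>\<^sub>M (\<mu> \<Otimes>\<^sub>M \<mu> \<Otimes>\<^sub>M \<mu>)"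
  interpret U: prob_space ?U by (rule U_prob)
  have P3: "prob_space (\<mu> \<Otimes>\<^sub>M \<mu> \<Otimes>\<^sub>M \<mu>)" by (rule prob_space_pair[OF P prob_space_pair[OF P P]])
  interpret M3: prob_space "\<mu> \<Otimes>\<^sub>M \<mu> \<Otimes>\<^sub>M \<mu>" by (rule P3)
  interpret U2: prob_space "?U \<Otimes>\<^sub>M ?U" by (rule prob_space_pair[OF U_prob U_prob])
  note AS[measurable]
  have T1e: "T1 = (\<lambda>z. (if snd (snd (fst z)) < min (fst (fst z)) (fst (snd (fst z)))
         then min (fst (fst z)) (fst (snd (fst z))) * fst (snd z) else 0)
     + (if min (fst (fst z)) (fst (snd (fst z))) < snd (snd (fst z)) \<and> snd (snd (fst z)) < max (fst (fst z)) (fst (snd (fst z)))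
         then (max (fst (fst z)) (fst (snd (fst z))) - min (fst (fst z)) (fst (snd (fst z)))) * fst (snd (snd z)) else 0)
     + (if max (fst (fst z)) (fst (snd (fst z))) < snd (snd (fst z))
         then (1 - max (fst (fst z)) (fst (snd (fst z)))) * snd (snd (snd z)) else 0)
     + 1 + max (fst (fst z)) (fst (snd (fst z))) * (2 - min (fst (fst z)) (fst (snd (fst z))) - max (fst (fst z)) (fst (snd (fst z)))))"
    by (auto simp: fun_eq_iff T1_def Let_def indicator_def split: prod.splits)
  have T1m: "T1 \<in> borel_measurable ?M"
  proof -
    note idmeas[measurable]
    show ?thesis unfolding T1e unif01_def by measurable
  qed
  define Psi where "Psi = (\<lambda>p. \<integral>\<^sup>+v. PhiF \<mu> A (fst p) (snd p) v * indicator {0<..<1} v \<partial>lborel)"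
  have Psim: "Psi \<in> borel_measurable (borel \<Otimes>\<^sub>M borel)"
  proof -
    have "(\<lambda>(p,v). PhiF \<mu> A (fst p) (snd p) v * indicator {0<..<1} v) \<in> borel_measurable ((borel \<Otimes>\<^sub>M borel) \<Otimes>\<^sub>M lborel)"
      by measurable
    from lborel.borel_measurable_nn_integral[OF this] show ?thesis unfolding Psi_def by simp
  qed
  have Psim1: "(\<lambda>u2. Psi (u1, u2)) \<in> borel_measurable borel" for u1
    using measurable_Pair2[OF Psim] by simp
  define Chi where "Chi = (\<lambda>u1. \<integral>\<^sup>+u2. Psi (u1,u2) * indicator {0<..<1} u2 \<partial>lborel)"
  have Chim: "Chi \<in> borel_measurable borel"
  proof -
    note Psim[measurable]
    have "(\<lambda>(u1,u2). Psi (u1,u2) * indicator {0<..<1} u2) \<in> borel_measurable (borel \<Otimes>\<^sub>M lborel)"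
      by measurable
    from lborel.borel_measurable_nn_integral[OF this] show ?thesis unfolding Chi_def by simp
  qed
  have Phim: "(\<lambda>v. PhiF \<mu> A u1 u2 v) \<in> borel_measurable borel" for u1 u2 by measurable
  have "emeasure (distr ?M borel T1) A = (\<integral>\<^sup>+x. indicator A x \<partial>(distr ?M borel T1))"
    by simp
  also have "\<dots> = (\<integral>\<^sup>+z. indicator A (T1 z) \<partial>?M)"
    apply (rule nn_integral_distr)
     apply (rule T1m)
    apply (rule borel_measurable_indicator)
    apply (simp add: AS)
    done
  also have "\<dots> = (\<integral>\<^sup>+u. \<integral>\<^sup>+c. indicator A (T1 (u,c)) \<partial>(\<mu> \<Otimes>\<^sub>M \<mu> \<Otimes>\<^sub>M \<mu>) \<partial>(?U \<Otimes>\<^sub>M ?U \<Otimes>\<^sub>M ?U))"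
    by (rule M3.nn_integral_fst[of "\<lambda>z. indicator A (T1 z)", symmetric]) (use T1m in measurable)
  also have "\<dots> = (\<integral>\<^sup>+u. PhiF \<mu> A (fst u) (fst (snd u)) (snd (snd u)) \<partial>(?U \<Otimes>\<^sub>M ?U \<Otimes>\<^sub>M ?U))"
  proof (intro nn_integral_cong)
    fix u :: "real \<times> real \<times> real"
    obtain u1 u2 v where u: "u = (u1,u2,v)" by (cases u) auto
    show "(\<integral>\<^sup>+c. indicator A (T1 (u,c)) \<partial>(\<mu> \<Otimes>\<^sub>M \<mu> \<Otimes>\<^sub>M \<mu>)) = PhiF \<mu> A (fst u) (fst (snd u)) (snd (snd u))"
      unfolding u PhiF_def by (simp add: inner1)
  qed
  also have "\<dots> = (\<integral>\<^sup>+u1. \<integral>\<^sup>+p. PhiF \<mu> A u1 (fst p) (snd p) \<partial>(?U \<Otimes>\<^sub>M ?U) \<partial>?U)"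
    by (rule U2.nn_integral_fst[of "\<lambda>u. PhiF \<mu> A (fst u) (fst (snd u)) (snd (snd u))", symmetric, simplified])
       (unfold unif01_def, measurable)
  also have "\<dots> = (\<integral>\<^sup>+u1. \<integral>\<^sup>+u2. \<integral>\<^sup>+v. PhiF \<mu> A u1 u2 v \<partial>?U \<partial>?U \<partial>?U)"
  proof -
    have e: "(\<integral>\<^sup>+p. PhiF \<mu> A u1 (fst p) (snd p) \<partial>(?U \<Otimes>\<^sub>M ?U)) = (\<integral>\<^sup>+u2. \<integral>\<^sup>+v. PhiF \<mu> A u1 u2 v \<partial>?U \<partial>?U)" for u1
      by (rule U.nn_integral_fst[of "\<lambda>p. PhiF \<mu> A u1 (fst p) (snd p)", symmetric, simplified])
         (unfold unif01_def, measurable)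
    show ?thesis by (simp only: e)
  qed
  also have "\<dots> = (\<integral>\<^sup>+u1. \<integral>\<^sup>+u2. Psi (u1,u2) \<partial>?U \<partial>?U)"
  proof -
    have e: "(\<integral>\<^sup>+v. PhiF \<mu> A u1 u2 v \<partial>?U) = Psi (u1,u2)" for u1 u2
      unfolding Psi_def using U_int[OF Phim] by simp
    show ?thesis by (simp only: e)
  qed
  also have "\<dots> = (\<integral>\<^sup>+u1. Chi u1 \<partial>?U)"
  proof -
    have e: "(\<integral>\<^sup>+u2. Psi (u1,u2) \<partial>?U) = Chi u1" for u1
      unfolding Chi_def using U_int[OF Psim1] by simp
    show ?thesis by (simp only: e)
  qed
  also have "\<dots> = (\<integral>\<^sup>+u1. Chi u1 * indicator {0<..<1} u1 \<partial>lborel)"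
    using U_int[OF Chim] by simp
  also have "\<dots> = (\<integral>\<^sup>+u1. (\<integral>\<^sup>+u2. GG \<mu> A (min u1 u2) (max u1 u2) * indicator {0<..<1} u2 \<partial>lborel) * indicator {0<..<1} u1 \<partial>lborel)"
  proof (intro nn_integral_cong)
    fix u1 :: real
    show "Chi u1 * indicator {0<..<1} u1 = (\<integral>\<^sup>+u2. GG \<mu> A (min u1 u2) (max u1 u2) * indicator {0<..<1} u2 \<partial>lborel) * indicator {0<..<1} u1"
    proof (cases "u1 \<in> {0<..<1}")
      case False then show ?thesis by simp
    next
      case True
      have "Chi u1 = (\<integral>\<^sup>+u2. GG \<mu> A (min u1 u2) (max u1 u2) * indicator {0<..<1} u2 \<partial>lborel)"
        unfolding Chi_def
      proof (intro nn_integral_cong)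
        fix u2 :: real
        show "Psi (u1, u2) * indicator {0<..<1} u2 = GG \<mu> A (min u1 u2) (max u1 u2) * indicator {0<..<1} u2"
        proof (cases "u2 \<in> {0<..<1}")
          case False then show ?thesis by simp
        next
          case True2: True
          let ?g = "gf (min u1 u2) (max u1 u2)"
          have e: "PhiF \<mu> A u1 u2 v = (if v < min u1 u2 then psi \<mu> A (min u1 u2) ?g
              else if min u1 u2 < v \<and> v < max u1 u2 then psi \<mu> A (max u1 u2 - min u1 u2) ?g
              else if max u1 u2 < v then psi \<mu> A (1 - max u1 u2) ?g else psi \<mu> A 0 ?g)" for v
            by (auto simp: PhiF_def Lf_def)
          have "Psi (u1,u2) = (\<integral>\<^sup>+v. (if v < min u1 u2 then psi \<mu> A (min u1 u2) ?g
              else if min u1 u2 < v \<and> v < max u1 u2 then psi \<mu> A (max u1 u2 - min u1 u2) ?g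
              else if max u1 u2 < v then psi \<mu> A (1 - max u1 u2) ?g else psi \<mu> A 0 ?g) * indicator {0<..<1} v \<partial>lborel)"
            by (simp only: Psi_def fst_conv snd_conv e)
          also have "\<dots> = GG \<mu> A (min u1 u2) (max u1 u2)"
            unfolding GG_def
            by (rule V_int) (use True True2 in auto)
          finally have "Psi (u1,u2) = GG \<mu> A (min u1 u2) (max u1 u2)" .
          then show ?thesis by simp
        qed
      qed
      then show ?thesis by simp
    qed
  qed
  also have "\<dots> = (\<integral>\<^sup>+a. \<integral>\<^sup>+b. HH \<mu> A a b \<partial>lborel \<partial>lborel) + (\<integral>\<^sup>+a. \<integral>\<^sup>+b. HH \<mu> A a b \<partial>lborel \<partial>lborel)"
    by (rule symm)
  also have "\<dots> = 2 * (DD \<mu> A 1 + DD \<mu> A 2 + DD \<mu> A 3)"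
    by (simp only: splitH mult_2)
  finally show ?thesis .
qed

end

theorem lemma9p1:
  fixes \<mu> :: "real measure"
  assumes "prob_space \<mu>"
    and "sets \<mu> = sets borel"
    and "\<mu> = distr ((unif01 \<Otimes>\<^sub>M unif01 \<Otimes>\<^sub>M unif01) \<Otimes>\<^sub>M (\<mu> \<Otimes>\<^sub>M \<mu> \<Otimes>\<^sub>M \<mu>)) borel T1"
  shows "\<mu> = distr ((XW_law \<Otimes>\<^sub>M J_law) \<Otimes>\<^sub>M \<mu>) borel T2"
proof (rule measure_eqI)
  show "sets \<mu> = sets (distr ((XW_law \<Otimes>\<^sub>M J_law) \<Otimes>\<^sub>M \<mu>) borel T2)"
    using assms(2) by simp
next
  fix A assume "A \<in> sets \<mu>"
  then have AS: "A \<in> sets borel" using assms(2) by simp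
  have "emeasure \<mu> A = emeasure (distr ((unif01 \<Otimes>\<^sub>M unif01 \<Otimes>\<^sub>M unif01) \<Otimes>\<^sub>M (\<mu> \<Otimes>\<^sub>M \<mu> \<Otimes>\<^sub>M \<mu>)) borel T1) A"
    using arg_cong[OF assms(3), of "\<lambda>M. emeasure M A"] .
  also have "\<dots> = 2 * (DD \<mu> A 1 + DD \<mu> A 2 + DD \<mu> A 3)"
    by (rule E1[OF assms(1,2) AS])
  also have "\<dots> = emeasure (distr ((XW_law \<Otimes>\<^sub>M J_law) \<Otimes>\<^sub>M \<mu>) borel T2) A"
    by (rule E2[OF assms(1,2) AS, symmetric])
  finally show "emeasure \<mu> A = emeasure (distr ((XW_law \<Otimes>\<^sub>M J_law) \<Otimes>\<^sub>M \<mu>) borel T2) A" .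
qed

end
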